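(* Let $c>0$. Let $\mathcal N_1=\{(M_3,N_1,N_2)\in\mathbb{C}^3: N_1^2+N_2^2=1\}$ carry the system \[ \dot M_3=-N_2,\qquad \dot N_1=cM_3N_2,\qquad \dot N_2=-cM_3N_1. \] For $k\in(0,1]$ let $\Gamma_k^1$ be the complex phase curve given by $\frac12cM_3^2+N_1=2k^2-1$, $N_1^2+N_2^2=1$ (for $k=1$ with the equilibrium $u=(M_3,N_1,N_2)=(0,1,0)$ removed). Let $\Omega_1$ be the closure of the set of real points of $\Gamma_1^1$ (the union of the two real orbits homoclinic to the hyperbolic equilibrium $u$). Then for every complex neighbourhood $U\subset\mathcal N_1$ of $\Omega_1$ there exists $\epsilon>0$ such that for $0<1-k<\epsilon$ the fundamental group $\pi_1(\Gamma_k^1)$ is generated by loops lying in $U$.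
   Context: Here $\mathcal N_1$ is identified with the invariant submanifold $\{(\mathbf M,\mathbf N)\in\mathbb{C}^6: M_1=M_2=N_3=0,\ N_1^2+N_2^2=1\}$ of the complexified Euler–Poisson equations for a symmetric heavy top with principal moments $A=B=1$, $C=1/c$ and $\mathbf L=[1,0,0]^T$; the system above is the restriction to $\mathcal N_1$. For $k\in(0,1)$, $\Gamma_k^1$ is a non-degenerate affine elliptic curve. *)

theory Defs
  imports "HOL-Analysis.Analysis"
begin

definition N1set :: "(complex \<times> complex \<times> complex) set" where
  "N1set = {(m, n1, n2). n1\<^sup>2 + n2\<^sup>2 = 1}"

definition Gamma :: "real \<Rightarrow> real \<Rightarrow> (complex \<times> complex \<times> complex) set" where
  "Gamma c k = {(m, n1, n2). complex_of_real c / 2 * m\<^sup>2 + n1 = complex_of_real (2 * k\<^sup>2 - 1)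
                              \<and> n1\<^sup>2 + n2\<^sup>2 = 1}
               - (if k = 1 then {(0, 1, 0)} else {})"

definition Omega1 :: "real \<Rightarrow> (complex \<times> complex \<times> complex) set" where
  "Omega1 c = closure {(m, n1, n2) \<in> Gamma c 1. m \<in> \<real> \<and> n1 \<in> \<real> \<and> n2 \<in> \<real>}"

inductive_set loop_words :: "'a::topological_space set \<Rightarrow> 'a \<Rightarrow> (real \<Rightarrow> 'a) set"
  for V :: "'a set" and p :: 'a where
  base: "\<lbrakk>path g; path_image g \<subseteq> V; pathstart g = p; pathfinish g = p\<rbrakk> \<Longrightarrow> g \<in> loop_words V p"
| join: "\<lbrakk>g \<in> loop_words V p; h \<in> loop_words V p\<rbrakk> \<Longrightarrow> g +++ h \<in> loop_words V p"
| rev: "g \<in> loop_words V p \<Longrightarrow> reversepath g \<in> loop_words V p"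

definition pi1_generated_by :: "'a::topological_space set \<Rightarrow> 'a set \<Rightarrow> bool" where
  "pi1_generated_by S V \<longleftrightarrow>
     (\<exists>p\<in>V. \<forall>g. path g \<and> path_image g \<subseteq> S \<and> pathstart g = p \<and> pathfinish g = p
                 \<longrightarrow> (\<exists>h\<in>loop_words V p. homotopic_paths S g h))"

end

theory Submission
  imports Defs
begin


definition Bad :: "complex \<Rightarrow> bool" where
  "Bad w \<longleftrightarrow> Im w = 0 \<and> \<bar>Re w\<bar> \<le> 1"

definition Sf :: "complex \<Rightarrow> complex" where
  "Sf w = w * csqrt (1 - 1 / w^2)"

lemma notBad_ne0: "\<not> Bad w \<Longrightarrow> w \<noteq> 0"
  by (auto simp: Bad_def)

lemma Sf_sq: "w \<noteq> 0 \<Longrightarrow> (Sf w)^2 = w^2 - 1"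
proof -
  assume w: "w \<noteq> 0"
  have "(Sf w)^2 = w^2 * (1 - 1/w^2)" by (simp add: Sf_def power_mult_distrib)
  also have "\<dots> = w^2 - 1" using w by (simp add: right_diff_distrib)
  finally show ?thesis .
qed

lemma Sf_ne0: "\<not> Bad w \<Longrightarrow> Sf w \<noteq> 0"
proof
  assume nb: "\<not> Bad w" and s: "Sf w = 0"
  have "w^2 - 1 = 0" using Sf_sq[OF notBad_ne0[OF nb]] s by simp
  then have "w^2 = 1" by simp
  then have "w = 1 \<or> w = -1" by (simp add: power2_eq_1_iff)
  then show False using nb by (auto simp: Bad_def)
qed



lemma notBad_arg: "\<not> Bad w \<Longrightarrow> 1 - 1 / w^2 \<notin> \<real>\<^sub>\<le>\<^sub>0"
proof
  assume nb: "\<not> Bad w" and z: "1 - 1 / w^2 \<in> \<real>\<^sub>\<le>\<^sub>0"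
  have w0: "w \<noteq> 0" using notBad_ne0[OF nb] .
  define v where "v = 1 / w^2"
  have vr: "Im v = 0" "Re v \<ge> 1" using z by (auto simp: complex_nonpos_Reals_iff v_def)
  have v: "v = of_real (Re v)" using vr(1) by (simp add: complex_eq_iff)
  have "w^2 = 1 / v" using w0 by (simp add: v_def)
  also have "\<dots> = of_real (1 / Re v)" using v by (metis of_real_1 of_real_divide)
  finally have w2: "w^2 = of_real (1 / Re v)" .
  have i: "2 * Re w * Im w = 0" using arg_cong[OF w2, of Im] by (simp only: Im_power2 Im_complex_of_real)
  have r: "(Re w)^2 - (Im w)^2 = 1 / Re v" using arg_cong[OF w2, of Re] by (simp only: Re_power2 Re_complex_of_real)
  have pos: "1 / Re v > 0" "1 / Re v \<le> 1" using vr by auto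
  have "Im w = 0"
  proof (rule ccontr)
    assume "Im w \<noteq> 0"
    then have "Re w = 0" using i by simp
    then have "0 < - ((Im w)^2)" using r pos by simp
    then show False by (simp add: not_less)
  qed
  then have "(Re w)^2 \<le> 1" using r pos by simp
  then have "\<bar>Re w\<bar> \<le> 1" by (simp add: abs_square_le_1)
  then show False using nb \<open>Im w = 0\<close> by (simp add: Bad_def)
qed

lemma open_notBad: "open {w. \<not> Bad w}"
proof -
  have "{w. \<not> Bad w} = {w. Im w \<noteq> 0} \<union> {w. 1 < \<bar>Re w\<bar>}" by (auto simp: Bad_def)
  also have "open \<dots>"
    by (intro open_Un open_Collect_neq open_Collect_less continuous_intros)
  finally show ?thesis .
qed

lemma Sf_cont: "continuous_on {w. \<not> Bad w} Sf"
proof -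
  have c1: "continuous_on {w. \<not> Bad w} (\<lambda>w. 1 - 1 / w^2)"
    by (intro continuous_intros) (auto dest: notBad_ne0)
  have "continuous_on {w. \<not> Bad w} (\<lambda>w. csqrt (1 - 1 / w^2))"
    by (rule continuous_on_compose2[OF continuous_on_csqrt c1]) (auto dest: notBad_arg)
  then show ?thesis unfolding Sf_def by (intro continuous_intros)
qed



definition clampr :: "real \<Rightarrow> real \<Rightarrow> real" where
  "clampr L x = max (-L) (min L x)"
definition Pr :: "real \<Rightarrow> real \<Rightarrow> complex \<Rightarrow> complex" where
  "Pr L d m = of_real (clampr L (Re m)) + \<i> * of_real (clampr d (Im m))"
definition mt :: "real \<Rightarrow> real \<Rightarrow> real \<Rightarrow> complex \<Rightarrow> complex" where
  "mt L d t m = (1 - of_real t) * m + of_real t * Pr L d m"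
definition n1f :: "real \<Rightarrow> real \<Rightarrow> complex \<Rightarrow> complex" where
  "n1f c a m = of_real a - of_real c / 2 * m^2"

lemma Re_n1f: "Re (n1f c a m) = a - c / 2 * ((Re m)^2 - (Im m)^2)"
  by (simp add: n1f_def Re_power2 Im_power2)
lemma Im_n1f: "Im (n1f c a m) = - c * Re m * Im m"
  by (simp add: n1f_def Re_power2 Im_power2)
lemma Re_mt: "Re (mt L d t m) = (1 - t) * Re m + t * clampr L (Re m)"
  by (simp add: mt_def Pr_def)
lemma Im_mt: "Im (mt L d t m) = (1 - t) * Im m + t * clampr d (Im m)"
  by (simp add: mt_def Pr_def)
lemma Pr_id: "\<bar>Re m\<bar> \<le> L \<Longrightarrow> \<bar>Im m\<bar> \<le> d \<Longrightarrow> Pr L d m = m"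
  by (simp add: Pr_def clampr_def complex_eq_iff)
lemma mt_id: "\<bar>Re m\<bar> \<le> L \<Longrightarrow> \<bar>Im m\<bar> \<le> d \<Longrightarrow> mt L d t m = m"
  by (simp add: mt_def Pr_id algebra_simps)

locale geo =
  fixes c a d L :: real
  assumes c: "c > 0" and a1: "a > -1" and a2: "a < 1" and d: "d > 0"
    and dd: "d^2 > 2 * (1 - a) / c" and L: "L = sqrt (2 * (1 + a) / c) + d"
begin

lemma L0: "L > 0"
proof -
  have "0 \<le> sqrt (2 * (1 + a) / c)" using a1 c by simp
  then show ?thesis using L d by linarith
qed

lemma bad_box:
  assumes "Bad (n1f c a m)"
  shows "\<bar>Re m\<bar> < L \<and> \<bar>Im m\<bar> < d"
proof -
  have im: "Re m * Im m = 0" using assms c by (simp add: Bad_def Im_n1f)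
  have re: "\<bar>a - c / 2 * ((Re m)^2 - (Im m)^2)\<bar> \<le> 1" using assms by (simp add: Bad_def Re_n1f)
  show ?thesis
  proof (cases "Im m = 0")
    case True
    then have "c / 2 * (Re m)^2 \<le> 1 + a" using re by simp
    then have "(Re m)^2 \<le> 2 * (1 + a) / c" using c by (simp add: field_simps)
    then have "sqrt ((Re m)^2) \<le> sqrt (2 * (1 + a) / c)" by (rule real_sqrt_le_mono)
    then have "\<bar>Re m\<bar> < L" using L d by simp
    then show ?thesis using True d by simp
  next
    case False
    then have r0: "Re m = 0" using im by simp
    then have "c / 2 * (Im m)^2 \<le> 1 - a" using re by simp
    then have "(Im m)^2 \<le> 2 * (1 - a) / c" using c by (simp add: field_simps)
    then have "(Im m)^2 < d^2" using dd by simp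
    from real_sqrt_less_mono[OF this] have "\<bar>Im m\<bar> < d" using d by simp
    then show ?thesis using r0 L0 by simp
  qed
qed

lemma seg:
  assumes nb: "\<not> Bad (n1f c a m)" and t: "0 \<le> t" "t \<le> 1"
  shows "\<not> Bad (n1f c a (mt L d t m))"
proof (cases "\<bar>Re m\<bar> \<le> L \<and> \<bar>Im m\<bar> \<le> d")
  case True
  then show ?thesis using nb by (simp add: mt_id)
next
  case False
  then consider "\<bar>Re m\<bar> > L" | "\<bar>Im m\<bar> > d" by linarith
  then show ?thesis
  proof cases
    case 1
    have "\<bar>Re (mt L d t m)\<bar> \<ge> L"
    proof (cases "Re m > 0")
      case True
      then have "Re m > L" using 1 by simp
      then have "clampr L (Re m) = L" using L0 by (simp add: clampr_def)
      then have "Re (mt L d t m) = (1 - t) * Re m + t * L" by (simp add: Re_mt)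
      also have "\<dots> \<ge> (1 - t) * L + t * L" using t \<open>Re m > L\<close> by (simp add: mult_left_mono)
      finally show ?thesis by (simp add: algebra_simps)
    next
      case False
      then have "Re m < - L" using 1 by simp
      then have "clampr L (Re m) = - L" using L0 by (simp add: clampr_def)
      then have "Re (mt L d t m) = (1 - t) * Re m - t * L" by (simp add: Re_mt)
      also have "\<dots> \<le> (1 - t) * (-L) - t * L" using t mult_left_mono[of "Re m" "-L" "1-t"] \<open>Re m < - L\<close> by simp
      finally show ?thesis by (simp add: algebra_simps)
    qed
    then show ?thesis using bad_box by force
  next
    case 2
    have "\<bar>Im (mt L d t m)\<bar> \<ge> d"
    proof (cases "Im m > 0")
      case True
      then have "Im m > d" using 2 by simp
      then have "clampr d (Im m) = d" using d by (simp add: clampr_def)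
      then have "Im (mt L d t m) = (1 - t) * Im m + t * d" by (simp add: Im_mt)
      also have "\<dots> \<ge> (1 - t) * d + t * d" using t \<open>Im m > d\<close> by (simp add: mult_left_mono)
      finally show ?thesis by (simp add: algebra_simps)
    next
      case False
      then have "Im m < - d" using 2 by simp
      then have "clampr d (Im m) = - d" using d by (simp add: clampr_def)
      then have "Im (mt L d t m) = (1 - t) * Im m - t * d" by (simp add: Im_mt)
      also have "\<dots> \<le> (1 - t) * (-d) - t * d" using t mult_left_mono[of "Im m" "-d" "1-t"] \<open>Im m < - d\<close> by simp
      finally show ?thesis by (simp add: algebra_simps)
    qed
    then show ?thesis using bad_box by force
  qed
qed

end


definition Gm :: "real \<Rightarrow> real \<Rightarrow> (complex \<times> complex \<times> complex) set" where
  "Gm c a = {p. of_real c / 2 * (fst p)^2 + fst (snd p) = of_real a \<and> (fst (snd p))^2 + (snd (snd p))^2 = 1}"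

definition F :: "real \<Rightarrow> real \<Rightarrow> real \<Rightarrow> real \<Rightarrow> real \<times> (complex \<times> complex \<times> complex) \<Rightarrow> complex \<times> complex \<times> complex" where
  "F c a L d x = (mt L d (fst x) (fst (snd x)), n1f c a (mt L d (fst x) (fst (snd x))),
      snd (snd (snd x)) * Sf (n1f c a (mt L d (fst x) (fst (snd x)))) / Sf (fst (snd (snd x))))"

definition Hd :: "real \<Rightarrow> real \<Rightarrow> real \<Rightarrow> real \<Rightarrow> real \<times> (complex \<times> complex \<times> complex) \<Rightarrow> complex \<times> complex \<times> complex" where
  "Hd c a L d x = (if Bad (fst (snd (snd x))) then snd x else F c a L d x)"

lemma Gm_n1: "p \<in> Gm c a \<Longrightarrow> fst (snd p) = n1f c a (fst p)"
  by (auto simp: Gm_def n1f_def algebra_simps)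

context geo begin

lemma H_in:
  assumes t: "0 \<le> t" "t \<le> 1" and p: "p \<in> Gm c a"
  shows "Hd c a L d (t, p) \<in> Gm c a"
proof (cases "Bad (fst (snd p))")
  case True then show ?thesis using p by (simp add: Hd_def)
next
  case False
  obtain m n1 n2 where pe: "p = (m, n1, n2)" by (cases p) auto
  have n1: "n1 = n1f c a m" and e: "n1^2 + n2^2 = 1" using p Gm_n1[OF p] by (auto simp: pe Gm_def)
  define m' where "m' = mt L d t m"
  define n1' where "n1' = n1f c a m'"
  have nb: "\<not> Bad n1" using False pe by simp
  have nb': "\<not> Bad n1'" using seg[of m t] nb t n1 by (simp add: n1'_def m'_def)
  have s1: "(Sf n1)^2 = n1^2 - 1" by (rule Sf_sq[OF notBad_ne0[OF nb]])
  have s1': "(Sf n1')^2 = n1'^2 - 1" by (rule Sf_sq[OF notBad_ne0[OF nb']])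
  have sn: "Sf n1 \<noteq> 0" by (rule Sf_ne0[OF nb])
  have hv: "Hd c a L d (t, p) = (m', n1', n2 * Sf n1' / Sf n1)"
    using nb by (simp add: Hd_def F_def pe m'_def n1'_def)
  have "n1'^2 + (n2 * Sf n1' / Sf n1)^2 = n1'^2 + n2^2 * (Sf n1')^2 / (Sf n1)^2"
    by (simp add: power_mult_distrib power_divide)
  also have "\<dots> = n1'^2 + (1 - n1^2) * (n1'^2 - 1) / (n1^2 - 1)"
  proof -
    have n2sq: "n2^2 = 1 - n1^2" using e by (simp add: algebra_simps)
    show ?thesis by (simp only: n2sq s1 s1')
  qed
  also have "\<dots> = 1"
  proof -
    have "n1^2 - 1 \<noteq> 0" using sn s1 by (metis power_not_zero)
    then show ?thesis by (simp add: field_simps)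
  qed
  finally show ?thesis unfolding hv Gm_def by (simp add: n1'_def n1f_def)
qed

lemma H0:
  assumes p: "p \<in> Gm c a"
  shows "Hd c a L d (0, p) = p"
proof (cases "Bad (fst (snd p))")
  case True then show ?thesis by (simp add: Hd_def)
next
  case False
  then have "Sf (fst (snd p)) \<noteq> 0" by (rule Sf_ne0)
  then show ?thesis using False Gm_n1[OF p] by (simp add: Hd_def F_def mt_def prod_eq_iff)
qed

lemma Hfix:
  assumes p: "p \<in> Gm c a" and b: "\<bar>Re (fst p)\<bar> \<le> L" "\<bar>Im (fst p)\<bar> \<le> d"
  shows "Hd c a L d (t, p) = p"
proof (cases "Bad (fst (snd p))")
  case True then show ?thesis by (simp add: Hd_def)
next
  case False
  then have "Sf (fst (snd p)) \<noteq> 0" by (rule Sf_ne0)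
  then show ?thesis using False Gm_n1[OF p] b by (simp add: Hd_def F_def mt_id prod_eq_iff)
qed

lemma H1box:
  assumes p: "p \<in> Gm c a"
  shows "\<bar>Re (fst (Hd c a L d (1, p)))\<bar> \<le> L \<and> \<bar>Im (fst (Hd c a L d (1, p)))\<bar> \<le> d"
proof (cases "Bad (fst (snd p))")
  case True
  then show ?thesis using bad_box[of "fst p"] Gm_n1[OF p] by (simp add: Hd_def)
next
  case False
  then show ?thesis using L0 d by (simp add: Hd_def F_def mt_def Pr_def clampr_def abs_le_iff) (simp add: max_def min_def)
qed

end


lemma mt_cont: "continuous_on S (\<lambda>x::real \<times> (complex \<times> complex \<times> complex). mt L d (fst x) (fst (snd x)))"
  unfolding mt_def Pr_def clampr_def by (intro continuous_intros)

context geo begin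

lemma H_cont: "continuous_on ({0..1} \<times> Gm c a) (Hd c a L d)"
proof -
  define X where "X = {0..1::real} \<times> Gm c a"
  define S1 where "S1 = X \<inter> {x. \<not> Bad (fst (snd (snd x)))}"
  define T1 where "T1 = X \<inter> {x. \<bar>Re (fst (snd x))\<bar> < L \<and> \<bar>Im (fst (snd x))\<bar> < d}"
  have XU: "X = S1 \<union> T1"
  proof -
    { fix x assume x: "x \<in> X" "Bad (fst (snd (snd x)))"
      then have "snd x \<in> Gm c a" by (auto simp: X_def)
      then have "fst (snd (snd x)) = n1f c a (fst (snd x))" by (rule Gm_n1)
      then have "x \<in> T1" using x bad_box[of "fst (snd x)"] by (simp add: T1_def) }
    then show ?thesis by (auto simp: S1_def T1_def)
  qed
  have o1: "open {x::real \<times> (complex \<times> complex \<times> complex). \<not> Bad (fst (snd (snd x)))}"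
  proof -
    have "{x::real \<times> (complex \<times> complex \<times> complex). \<not> Bad (fst (snd (snd x)))} = (\<lambda>x. fst (snd (snd x))) -` {w. \<not> Bad w}"
      by auto
    also have "open \<dots>" by (intro continuous_open_vimage open_notBad continuous_intros)
    finally show ?thesis .
  qed
  have o2: "open {x::real \<times> (complex \<times> complex \<times> complex). \<bar>Re (fst (snd x))\<bar> < L \<and> \<bar>Im (fst (snd x))\<bar> < d}"
    by (intro open_Collect_conj open_Collect_less continuous_intros)
  have opS: "openin (top_of_set (S1 \<union> T1)) S1"
  proof -
    have "openin (top_of_set X) S1" unfolding S1_def using o1 by (rule openin_open_Int)
    then show ?thesis using XU by simp
  qed
  have opT: "openin (top_of_set (S1 \<union> T1)) T1"
  proof -
    have "openin (top_of_set X) T1" unfolding T1_def using o2 by (rule openin_open_Int)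
    then show ?thesis using XU by simp
  qed
  have cS: "continuous_on S1 (Hd c a L d)"
  proof -
    have inner: "continuous_on S1 (\<lambda>x. n1f c a (mt L d (fst x) (fst (snd x))))"
      unfolding n1f_def by (intro continuous_intros mt_cont)
    have sub1: "(\<lambda>x. n1f c a (mt L d (fst x) (fst (snd x)))) ` S1 \<subseteq> {w. \<not> Bad w}"
    proof
      fix w assume "w \<in> (\<lambda>x. n1f c a (mt L d (fst x) (fst (snd x)))) ` S1"
      then obtain x where x: "x \<in> S1" and w: "w = n1f c a (mt L d (fst x) (fst (snd x)))" by blast
      have g: "snd x \<in> Gm c a" and t: "0 \<le> fst x" "fst x \<le> 1" and nb: "\<not> Bad (fst (snd (snd x)))"
        using x by (auto simp: S1_def X_def)
      have "\<not> Bad (n1f c a (fst (snd x)))" using nb Gm_n1[OF g] by simp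
      then show "w \<in> {w. \<not> Bad w}" using seg t w by simp
    qed
    have c1: "continuous_on S1 (\<lambda>x. Sf (n1f c a (mt L d (fst x) (fst (snd x)))))"
      by (rule continuous_on_compose2[OF Sf_cont inner sub1])
    have c2: "continuous_on S1 (\<lambda>x. Sf (fst (snd (snd x))))"
      by (rule continuous_on_compose2[OF Sf_cont]) (auto simp: S1_def intro!: continuous_intros)
    have nz: "\<forall>x\<in>S1. Sf (fst (snd (snd x))) \<noteq> 0" using Sf_ne0 by (auto simp: S1_def)
    have "continuous_on S1 (F c a L d)"
      unfolding F_def
      by (intro continuous_on_Pair continuous_on_divide continuous_on_mult c1 c2 nz mt_cont inner
          continuous_intros)
    then show ?thesis by (rule continuous_on_eq) (auto simp: Hd_def S1_def)
  qed
  have cT: "continuous_on T1 (Hd c a L d)"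
  proof -
    have "continuous_on T1 (\<lambda>x::real \<times> (complex \<times> complex \<times> complex). snd x)" by (intro continuous_intros)
    then show ?thesis
    proof (rule continuous_on_eq)
      fix x assume "x \<in> T1"
      then have "snd x \<in> Gm c a" "\<bar>Re (fst (snd x))\<bar> \<le> L" "\<bar>Im (fst (snd x))\<bar> \<le> d"
        by (auto simp: T1_def X_def)
      from Hfix[OF this, of "fst x"] show "snd x = Hd c a L d x" by simp
    qed
  qed
  have "continuous_on (S1 \<union> T1) (Hd c a L d)"
    by (rule continuous_on_Un_local_open[OF opS opT cS cT])
  then show ?thesis using XU by (simp add: X_def)
qed

end


lemma sq_real: "(z::complex)^2 = of_real x \<Longrightarrow> x \<ge> 0 \<Longrightarrow> Im z = 0"
proof -
  assume z: "z^2 = of_real x" and x: "x \<ge> 0"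
  have i: "2 * Re z * Im z = 0" using arg_cong[OF z, of Im] by (simp only: Im_power2 Im_complex_of_real)
  have r: "(Re z)^2 - (Im z)^2 = x" using arg_cong[OF z, of Re] by (simp only: Re_power2 Re_complex_of_real)
  show "Im z = 0"
  proof (rule ccontr)
    assume "Im z \<noteq> 0"
    then have "Re z = 0" using i by simp
    then have r0: "(Re z)^2 = 0" by simp
    have "(Im z)^2 > 0" using \<open>Im z \<noteq> 0\<close> by simp
    then show False using r x r0 by linarith
  qed
qed

lemma omega_base: "c > 0 \<Longrightarrow> (0, 1, 0) \<in> Omega1 c"
proof -
  assume c: "c > 0"
  define S where "S = {(m, n1, n2) \<in> Gamma c 1. m \<in> \<real> \<and> n1 \<in> \<real> \<and> n2 \<in> \<real>}"
  define \<phi> where "\<phi> = (\<lambda>u::real. (complex_of_real u, complex_of_real (1 - c * u^2 / 2),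
                 complex_of_real (sqrt (1 - (1 - c * u^2 / 2)^2))))"
  have lim: "(\<phi> \<longlongrightarrow> \<phi> 0) (at_right 0)"
    unfolding \<phi>_def by (intro tendsto_intros) auto
  have phi0: "\<phi> 0 = (0, 1, 0)" by (simp add: \<phi>_def)
  have ev: "eventually (\<lambda>u. \<phi> u \<in> closure S) (at_right 0)"
    unfolding eventually_at_right_field
  proof (intro exI[of _ "sqrt (4 / c)"] conjI allI impI)
    show "0 < sqrt (4 / c)" using c by simp
    fix u :: real assume u: "0 < u" "u < sqrt (4 / c)"
    have "u^2 < (sqrt (4 / c))^2" using u by (intro power_strict_mono) auto
    then have u2: "u^2 < 4 / c" using c by simp
    then have cu: "c * u^2 < 4" using c by (simp add: field_simps)
    have cu0: "0 < c * u^2" using c u by simp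
    define \<nu> where "\<nu> = 1 - c * u^2 / 2"
    have nu: "\<nu>^2 \<le> 1" using cu cu0 unfolding \<nu>_def by (intro abs_square_le_1[THEN iffD2]) simp
    have e1: "\<nu>^2 + (sqrt (1 - \<nu>^2))^2 = 1" using nu by simp
    have e1c: "(complex_of_real \<nu>)^2 + (complex_of_real (sqrt (1 - \<nu>^2)))^2 = 1"
      by (metis e1 of_real_add of_real_power of_real_1)
    have e2: "complex_of_real c / 2 * (complex_of_real u)^2 + complex_of_real \<nu> = complex_of_real (2 * 1^2 - 1)"
      unfolding \<nu>_def by (simp add: field_simps)
    have "\<phi> u \<in> S"
      using e1c e2 u unfolding S_def Gamma_def \<phi>_def \<nu>_def[symmetric] by auto
    then show "\<phi> u \<in> closure S" using closure_subset by blast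
  qed
  have "\<phi> 0 \<in> closure S"
    by (rule Lim_in_closed_set[OF closed_closure ev _ lim]) simp
  then show ?thesis using phi0 by (simp add: Omega1_def S_def)
qed

lemma omega_pt:
  assumes c: "c > 0" and m: "Im m = 0" "(Re m)^2 \<le> 4 / c"
    and e1: "complex_of_real c / 2 * m^2 + n1 = 1" and e2: "n1^2 + n2^2 = 1"
  shows "(m, n1, n2) \<in> Omega1 c"
proof (cases "(m, n1, n2) = (0, 1, 0)")
  case True
  then show ?thesis using omega_base[OF c] by simp
next
  case False
  define u where "u = Re m"
  have mu: "m = of_real u" using m by (simp add: u_def complex_eq_iff)
  have n1e: "n1 = of_real (1 - c * u^2 / 2)" using e1 unfolding mu by (simp add: field_simps)
  have cu: "c * u^2 \<le> 4" using m c by (simp add: u_def field_simps)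
  have cu0: "0 \<le> c * u^2" using c by simp
  have nu: "(1 - c * u^2 / 2)^2 \<le> 1" using cu cu0 by (intro abs_square_le_1[THEN iffD2]) simp
  have "n2^2 = 1 - n1^2" using e2 by (simp add: algebra_simps)
  also have "\<dots> = of_real (1 - (1 - c * u^2 / 2)^2)" unfolding n1e by simp
  finally have "n2^2 = complex_of_real (1 - (1 - c * u^2 / 2)^2)" .
  from sq_real[OF this] nu have "Im n2 = 0" by simp
  then have "n2 \<in> \<real>" by (simp add: complex_is_Real_iff)
  moreover have "m \<in> \<real>" "n1 \<in> \<real>" using mu n1e by auto
  moreover have "(m, n1, n2) \<in> Gamma c 1" using False e1 e2 by (simp add: Gamma_def)
  ultimately show ?thesis unfolding Omega1_def using closure_subset by fast
qed



definition dk :: "real \<Rightarrow> real \<Rightarrow> real" where "dk c k = sqrt (8 * (1 - k^2) / c)"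
definition Lk :: "real \<Rightarrow> real \<Rightarrow> real" where "Lk c k = sqrt (2 * (1 + (2 * k^2 - 1)) / c) + dk c k"

lemma near_one:
  assumes c: "c > 0" and oU: "open U'" and Om: "Omega1 c \<subseteq> U'"
  shows "\<exists>\<epsilon>>0. \<forall>k. 0 < k \<and> k < 1 \<and> 1 - k < \<epsilon> \<longrightarrow>
          (\<forall>p \<in> Gm c (2 * k^2 - 1). \<bar>Re (fst p)\<bar> \<le> Lk c k \<and> \<bar>Im (fst p)\<bar> \<le> dk c k \<longrightarrow> p \<in> U')"
proof -
  define Q0 where "Q0 = {x :: real \<times> complex \<times> complex \<times> complex.
     0 \<le> fst x \<and> fst x \<le> 1 \<and> \<bar>Re (fst (snd x))\<bar> \<le> Lk c (fst x) \<and> \<bar>Im (fst (snd x))\<bar> \<le> dk c (fst x) \<and>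
     complex_of_real c / 2 * (fst (snd x))^2 + fst (snd (snd x)) = complex_of_real (2 * (fst x)^2 - 1) \<and>
     (fst (snd (snd x)))^2 + (snd (snd (snd x)))^2 = 1}"
  define Q where "Q = Q0 \<inter> snd -` (- U')"
  have cQ0: "closed Q0" unfolding Q0_def Lk_def dk_def
    using c by (intro closed_Collect_conj closed_Collect_le closed_Collect_eq continuous_intros) auto
  have cQ: "closed Q" unfolding Q_def
    using cQ0 oU by (intro closed_Int closed_vimage_snd) auto
  define B1 where "B1 = sqrt (4 / c) + 2 * sqrt (8 / c)"
  define B2 where "B2 = 1 + c / 2 * B1^2"
  have B1: "0 \<le> B1" using c by (simp add: B1_def)
  have bQ0: "Q0 \<subseteq> cball 0 1 \<times> (cball 0 B1 \<times> (cball 0 B2 \<times> cball 0 (1 + B2)))"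
  proof
    fix x assume x: "x \<in> Q0"
    obtain k m n1 n2 where xe: "x = (k, m, n1, n2)" by (cases x) auto
    have k: "0 \<le> k" "k \<le> 1" and bR: "\<bar>Re m\<bar> \<le> Lk c k" and bI: "\<bar>Im m\<bar> \<le> dk c k"
      and e1: "complex_of_real c / 2 * m^2 + n1 = complex_of_real (2 * k^2 - 1)"
      and e2: "n1^2 + n2^2 = 1" using x by (auto simp: Q0_def xe)
    have k2: "k^2 \<le> 1" "0 \<le> k^2" using k by (auto simp: power_le_one)
    have d8: "dk c k \<le> sqrt (8 / c)" unfolding dk_def using c k2
      by (intro real_sqrt_le_mono) (simp add: divide_right_mono)
    have d4: "sqrt (2 * (1 + (2 * k^2 - 1)) / c) \<le> sqrt (4 / c)" using c k2
      by (intro real_sqrt_le_mono) (simp add: divide_right_mono)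
    have nm: "norm m \<le> B1" using cmod_le[of m] bR bI d8 d4 unfolding Lk_def B1_def by linarith
    have nm2: "(norm m)^2 \<le> B1^2" using nm by (intro power_mono) auto
    have "n1 = complex_of_real (2 * k^2 - 1) - complex_of_real c / 2 * m^2" using e1 by (simp add: algebra_simps)
    then have "norm n1 \<le> norm (complex_of_real (2 * k^2 - 1)) + norm (complex_of_real c / 2 * m^2)"
      using norm_triangle_ineq4 by metis
    also have "\<dots> = \<bar>2 * k^2 - 1\<bar> + c / 2 * (norm m)^2"
    proof -
      have "norm (complex_of_real (2 * k^2 - 1)) = \<bar>2 * k^2 - 1\<bar>" by (rule norm_of_real)
      moreover have "norm (complex_of_real c / 2 * m^2) = c / 2 * (norm m)^2"
        using c by (simp add: norm_mult norm_power norm_divide)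
      ultimately show ?thesis by simp
    qed
    also have "\<dots> \<le> 1 + c / 2 * B1^2" using k2 nm2 c by (intro add_mono mult_left_mono) (auto simp: abs_le_iff)
    finally have nn1: "norm n1 \<le> B2" by (simp add: B2_def)
    have "(norm n2)^2 = norm (n2^2)" by (simp add: norm_power)
    also have "n2^2 = 1 - n1^2" using e2 by (simp add: algebra_simps)
    also have "norm (1 - n1^2) \<le> 1 + (norm n1)^2" using norm_triangle_ineq4[of 1 "n1^2"] by (simp add: norm_power)
    also have "\<dots> \<le> (1 + norm n1)^2" by (simp add: power2_eq_square algebra_simps)
    finally have "norm n2 \<le> 1 + norm n1" by (rule power2_le_imp_le) simp
    then have "norm n2 \<le> 1 + B2" using nn1 by simp
    then show "x \<in> cball 0 1 \<times> (cball 0 B1 \<times> (cball 0 B2 \<times> cball 0 (1 + B2)))"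
      using k nm nn1 by (simp add: xe)
  qed
  have bQ: "bounded Q" unfolding Q_def
    by (rule bounded_subset[OF _ bQ0[THEN subset_trans[OF Int_lower1]]])
       (intro bounded_Times bounded_cball)
  have compQ: "compact Q" using cQ bQ by (simp add: compact_eq_bounded_closed)
  then have cK: "closed (fst ` Q)" by (intro compact_imp_closed compact_continuous_image continuous_intros)
  have n1Q: "1 \<notin> fst ` Q"
  proof
    assume "1 \<in> fst ` Q"
    then obtain m n1 n2 where q: "(1, m, n1, n2) \<in> Q" by force
    have d1: "dk c 1 = 0" by (simp add: dk_def)
    have "Im m = 0" using q d1 by (auto simp: Q_def Q0_def)
    moreover have "\<bar>Re m\<bar> \<le> sqrt (4 / c)" using q d1 by (auto simp: Q_def Q0_def Lk_def)
    then have "\<bar>Re m\<bar>^2 \<le> (sqrt (4 / c))^2" by (intro power_mono) auto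
    then have "(Re m)^2 \<le> 4 / c" using c by simp
    moreover have "complex_of_real c / 2 * m^2 + n1 = 1" "n1^2 + n2^2 = 1"
      using q by (auto simp: Q_def Q0_def)
    ultimately have "(m, n1, n2) \<in> Omega1 c" using omega_pt[OF c] by blast
    then show False using q Om by (auto simp: Q_def)
  qed
  have "open (- fst ` Q)" using cK by auto
  then obtain \<epsilon> where e: "\<epsilon> > 0" "ball 1 \<epsilon> \<subseteq> - fst ` Q"
    using n1Q by (meson ComplI open_contains_ball)
  show ?thesis
  proof (intro exI[of _ \<epsilon>] conjI e allI impI ballI)
    fix k :: real and p assume k: "0 < k \<and> k < 1 \<and> 1 - k < \<epsilon>" and p: "p \<in> Gm c (2 * k^2 - 1)"
      and b: "\<bar>Re (fst p)\<bar> \<le> Lk c k \<and> \<bar>Im (fst p)\<bar> \<le> dk c k"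
    show "p \<in> U'"
    proof (rule ccontr)
      assume "p \<notin> U'"
      then have "(k, p) \<in> Q" using k p b by (auto simp: Q_def Q0_def Gm_def)
      moreover have "k \<in> ball 1 \<epsilon>" using k by (simp add: dist_real_def)
      ultimately show False using e by force
    qed
  qed
qed



theorem lemma6:
  fixes c :: real
  assumes "c > 0"
  shows "\<forall>U. openin (top_of_set N1set) U \<and> Omega1 c \<subseteq> U \<longrightarrow>
           (\<exists>\<epsilon>>0. \<forall>k::real. 0 < k \<and> 0 < 1 - k \<and> 1 - k < \<epsilon> \<longrightarrow>
              pi1_generated_by (Gamma c k) (Gamma c k \<inter> U))"
proof (intro allI impI, elim conjE)
  fix U assume oU: "openin (top_of_set N1set) U" and Om: "Omega1 c \<subseteq> U"
  have c: "c > 0" by (rule assms)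
  obtain U' where oU': "open U'" and UU: "U = N1set \<inter> U'" using oU by (auto simp: openin_open)
  have Om': "Omega1 c \<subseteq> U'" using Om UU by auto
  obtain \<epsilon> where e: "\<epsilon> > 0" and eP: "\<And>k. 0 < k \<and> k < 1 \<and> 1 - k < \<epsilon> \<Longrightarrow>
          (\<forall>p \<in> Gm c (2 * k^2 - 1). \<bar>Re (fst p)\<bar> \<le> Lk c k \<and> \<bar>Im (fst p)\<bar> \<le> dk c k \<longrightarrow> p \<in> U')"
    using near_one[OF c oU' Om'] by blast
  show "\<exists>\<epsilon>>0. \<forall>k::real. 0 < k \<and> 0 < 1 - k \<and> 1 - k < \<epsilon> \<longrightarrow>
              pi1_generated_by (Gamma c k) (Gamma c k \<inter> U)"
  proof (intro exI[of _ \<epsilon>] conjI e allI impI, elim conjE)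
    fix k :: real assume k0: "0 < k" and k1: "0 < 1 - k" and ke: "1 - k < \<epsilon>"
    define a where "a = 2 * k^2 - 1"
    define d where "d = dk c k"
    define L where "L = Lk c k"
    have kk: "0 < k^2" "k^2 < 1" using k0 k1 by (auto simp: power_less_one_iff)
    interpret G: geo c a d L
    proof
      show "c > 0" by (rule c)
      show "a > -1" "a < 1" using kk by (auto simp: a_def)
      show "d > 0" using kk c by (simp add: d_def dk_def)
      have "d^2 = 8 * (1 - k^2) / c" using kk c by (simp add: d_def dk_def)
      also have "\<dots> > 2 * (1 - a) / c" using kk c by (simp add: a_def divide_strict_right_mono)
      finally show "d^2 > 2 * (1 - a) / c" .
      show "L = sqrt (2 * (1 + a) / c) + d" by (simp add: L_def Lk_def a_def d_def)
    qed
    have GG: "Gamma c k = Gm c a" using k1 by (auto simp: Gamma_def Gm_def a_def)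
    have Kin: "p \<in> Gamma c k \<inter> U" if "p \<in> Gm c a" "\<bar>Re (fst p)\<bar> \<le> L" "\<bar>Im (fst p)\<bar> \<le> d" for p
    proof -
      have "p \<in> U'" using eP[of k] k0 k1 ke that by (simp add: a_def L_def d_def)
      moreover have "p \<in> N1set" using that(1) by (auto simp: Gm_def N1set_def)
      ultimately show ?thesis using that GG UU by auto
    qed
    define p0 where "p0 = (0::complex, complex_of_real a, csqrt (1 - (complex_of_real a)^2))"
    have p0G: "p0 \<in> Gm c a" by (simp add: p0_def Gm_def)
    have p0b: "\<bar>Re (fst p0)\<bar> \<le> L" "\<bar>Im (fst p0)\<bar> \<le> d" using G.L0 G.d by (auto simp: p0_def)
    have p0fix: "Hd c a L d (t, p0) = p0" for t by (rule G.Hfix[OF p0G p0b])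
    show "pi1_generated_by (Gamma c k) (Gamma c k \<inter> U)"
      unfolding pi1_generated_by_def
    proof (rule bexI[of _ p0], intro allI impI, elim conjE)
      show "p0 \<in> Gamma c k \<inter> U" by (rule Kin[OF p0G p0b])
      fix g assume pg: "path g" and ig: "path_image g \<subseteq> Gamma c k"
        and sg: "pathstart g = p0" and fg: "pathfinish g = p0"
      have gG: "g s \<in> Gm c a" if "s \<in> {0..1}" for s
        using ig that GG by (auto simp: path_image_def)
      define h where "h = (\<lambda>s. Hd c a L d (1, g s))"
      define hh where "hh = (\<lambda>x. Hd c a L d (fst x, g (snd x)))"
      have inner: "continuous_on ({0..1} \<times> {0..1}) (\<lambda>x::real \<times> real. (fst x, g (snd x)))"
        using pg unfolding path_def
        by (intro continuous_on_Pair continuous_on_fst continuous_on_id continuous_on_compose2[OF _ continuous_on_snd]) auto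
      have chh: "continuous_on ({0..1} \<times> {0..1}) hh"
        unfolding hh_def
        by (rule continuous_on_compose2[OF G.H_cont inner]) (use gG in force)
      have hom: "homotopic_paths (Gamma c k) g h"
        unfolding homotopic_paths
      proof (intro exI[of _ hh] conjI chh ballI)
        show "hh \<in> {0..1} \<times> {0..1} \<rightarrow> Gamma c k"
        proof
          fix x :: "real \<times> real" assume "x \<in> {0..1} \<times> {0..1}"
          then have "0 \<le> fst x" "fst x \<le> 1" "g (snd x) \<in> Gm c a" using gG by (auto simp: mem_Times_iff)
          from G.H_in[OF this] show "hh x \<in> Gamma c k" using GG by (simp add: hh_def)
        qed
        fix x :: real assume "x \<in> {0..1}"
        then show "hh (0, x) = g x" "hh (1, x) = h x"
          using G.H0 gG by (auto simp: hh_def h_def)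
      next
        fix t :: real assume "t \<in> {0..1}"
        show "pathstart (hh \<circ> Pair t) = pathstart g" "pathfinish (hh \<circ> Pair t) = pathfinish g"
          using sg fg p0fix by (auto simp: hh_def pathstart_def pathfinish_def)
      qed
      have "h \<in> loop_words (Gamma c k \<inter> U) p0"
      proof (rule loop_words.base)
        show "path h" using homotopic_paths_imp_path[OF hom] by simp
        show "path_image h \<subseteq> Gamma c k \<inter> U"
        proof
          fix y assume "y \<in> path_image h"
          then obtain s where s: "s \<in> {0..1}" and y: "y = h s" by (auto simp: path_image_def)
          have "h s \<in> Gm c a" unfolding h_def by (rule G.H_in) (use gG s in auto)
          moreover have "\<bar>Re (fst (h s))\<bar> \<le> L \<and> \<bar>Im (fst (h s))\<bar> \<le> d"
            unfolding h_def by (rule G.H1box[OF gG[OF s]])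
          ultimately show "y \<in> Gamma c k \<inter> U" using Kin y by auto
        qed
        show "pathstart h = p0" "pathfinish h = p0"
          using sg fg p0fix by (auto simp: h_def pathstart_def pathfinish_def)
      qed
      then show "\<exists>h\<in>loop_words (Gamma c k \<inter> U) p0. homotopic_paths (Gamma c k) g h"
        using hom by blast
    qed
  qed
qed


end
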